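(* Let $a,b,f,d$ be positive integers with $f<\min\{a,b\}$. Let $A_1$ be the $a\times(a+b)$ array whose empty cells are exactly those in rows $[a-f+1,a]$ and columns $[1,a]$, and let $B_1$ be the $(b+f)\times(a+b)$ array whose empty cells are exactly those in rows $[b+1,b+f]$ and columns $[a+f+1,a+b]$. Let $A_2=J_{d,a+b}$ be the completely filled $d\times(a+b)$ array. Let $\phi$ be the bishop's move function on $[A_1\mid A_2]^T$, and let $\sigma$ be the move function on $[B_1\mid A_2]^T$ given by $\sigma(x)=s_C(s_R(x))$ if $x$ lies in a row of $A_2$ and $\sigma(x)=s_C(s_R^{-1}(x))$ if $x$ lies in a row of $B_1$. Then $A_1$ and $B_1$ are $(\phi,\sigma)$-equivalent with respect to $A_2$.
   Context: Arrays are partially filled and toroidal; $F(X)$ is the set of filled cells. $s_R(i,j)=(i,j+t)$, $s_C(i,j)=(i+t,j)$ with $t\ge1$ minimal such that the cell is filled (computed in the whole stacked array). $[Y\mid X]^T$ denotes the array obtained by placing $Y$ above $X$. For $\phi$ on $[A_1\mid X]^T$ and $\sigma$ on $[B_1\mid X]^T$, $\phi_2(x)=\phi^t(x)$ with $t\ge1$ minimal such that $\phi^t(x)\in X$ (for $x\in F(X)$), similarly $\sigma_2$. $A_1,B_1$ are $(\phi,\sigma)$-equivalent with respect to $X$ if for every $x\in F(X)$: $\phi(x)\notin X\iff\sigma(x)\notin X$, and when both are outside $X$, $\phi_2(x)=\sigma_2(x)$. *)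

theory Defs
  imports Main
begin

text \<open>Cells are pairs (row, column), 0-indexed. An array with R rows and C columns is
  represented by its set F of filled cells (a subset of {0..<R} x {0..<C}).\<close>

definition sR :: "nat \<Rightarrow> (nat \<times> nat) set \<Rightarrow> nat \<times> nat \<Rightarrow> nat \<times> nat" where
  "sR C F x = (let (i, j) = x;
                   t = (LEAST t. 1 \<le> t \<and> (i, (j + t) mod C) \<in> F)
               in (i, (j + t) mod C))"

definition sC :: "nat \<Rightarrow> (nat \<times> nat) set \<Rightarrow> nat \<times> nat \<Rightarrow> nat \<times> nat" where
  "sC R F x = (let (i, j) = x;
                   t = (LEAST t. 1 \<le> t \<and> ((i + t) mod R, j) \<in> F)
               in ((i + t) mod R, j))"

definition sR_inv :: "nat \<Rightarrow> (nat \<times> nat) set \<Rightarrow> nat \<times> nat \<Rightarrow> nat \<times> nat" where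
  "sR_inv C F = the_inv_into F (sR C F)"

text \<open>[Y | X]^T : Y (with mY rows) placed above X; rows of X are shifted down by mY.\<close>
definition stack :: "(nat \<times> nat) set \<Rightarrow> nat \<Rightarrow> (nat \<times> nat) set \<Rightarrow> (nat \<times> nat) set" where
  "stack FY mY FX = FY \<union> {(i + mY, j) | i j. (i, j) \<in> FX}"

text \<open>phi_2: first return to the X-part (rows >= m) of the stacked array, starting from
  the cell x of X (given in X-coordinates); the result is given in X-coordinates.\<close>
definition first_return :: "(nat \<times> nat \<Rightarrow> nat \<times> nat) \<Rightarrow> nat \<Rightarrow> nat \<times> nat \<Rightarrow> nat \<times> nat" where
  "first_return phi m x = (let y = (fst x + m, snd x);
                               t = (LEAST t. 1 \<le> t \<and> m \<le> fst ((phi ^^ t) y));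
                               z = (phi ^^ t) y
                           in (fst z - m, snd z))"

text \<open>(phi,sigma)-equivalence with respect to X, where phi acts on [A|X]^T (A has mA rows)
  and sigma acts on [B|X]^T (B has mB rows).\<close>
definition phi_sigma_equiv ::
  "(nat \<times> nat \<Rightarrow> nat \<times> nat) \<Rightarrow> nat \<Rightarrow> (nat \<times> nat \<Rightarrow> nat \<times> nat) \<Rightarrow> nat \<Rightarrow> (nat \<times> nat) set \<Rightarrow> bool" where
  "phi_sigma_equiv phi mA sigma mB FX \<longleftrightarrow>
     (\<forall>x\<in>FX.
        (fst (phi (fst x + mA, snd x)) < mA \<longleftrightarrow> fst (sigma (fst x + mB, snd x)) < mB) \<and>
        (fst (phi (fst x + mA, snd x)) < mA \<and> fst (sigma (fst x + mB, snd x)) < mB \<longrightarrow>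
           first_return phi mA x = first_return sigma mB x))"

text \<open>The concrete arrays (0-indexed versions of the paper's 1-indexed arrays).\<close>
definition A1 :: "nat \<Rightarrow> nat \<Rightarrow> nat \<Rightarrow> (nat \<times> nat) set" where
  "A1 a b f = {(i, j). i < a \<and> j < a + b \<and> \<not> (a - f \<le> i \<and> j < a)}"

definition B1 :: "nat \<Rightarrow> nat \<Rightarrow> nat \<Rightarrow> (nat \<times> nat) set" where
  "B1 a b f = {(i, j). i < b + f \<and> j < a + b \<and> \<not> (b \<le> i \<and> a + f \<le> j)}"

definition J :: "nat \<Rightarrow> nat \<Rightarrow> (nat \<times> nat) set" where
  "J d n = {(i, j). i < d \<and> j < n}"

definition bishop :: "nat \<Rightarrow> nat \<Rightarrow> (nat \<times> nat) set \<Rightarrow> nat \<times> nat \<Rightarrow> nat \<times> nat" where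
  "bishop R C F x = sC R F (sR C F x)"

end

theory Submission imports Defs begin

lemma fst_sR[simp]: "fst (sR C F x) = fst x"
  by (cases x) (simp add: sR_def Let_def)

lemma sR_eq:
  assumes "1 \<le> t" "(i, (j+t) mod C) \<in> F" "\<And>s. 1 \<le> s \<Longrightarrow> s < t \<Longrightarrow> (i,(j+s) mod C) \<notin> F"
  shows "sR C F (i,j) = (i, (j+t) mod C)"
proof -
  have "(LEAST t. 1 \<le> t \<and> (i, (j+t) mod C) \<in> F) = t"
    apply (rule Least_equality)
    using assms apply simp
    using assms not_le by blast
  then show ?thesis by (simp add: sR_def)
qed

lemma sC_eq:
  assumes "1 \<le> t" "((i+t) mod R, j) \<in> F" "\<And>s. 1 \<le> s \<Longrightarrow> s < t \<Longrightarrow> ((i+s) mod R, j) \<notin> F"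
  shows "sC R F (i,j) = ((i+t) mod R, j)"
proof -
  have "(LEAST t. 1 \<le> t \<and> ((i+t) mod R, j) \<in> F) = t"
    apply (rule Least_equality)
    using assms apply simp
    using assms not_le by blast
  then show ?thesis by (simp add: sC_def)
qed

lemma sR_block:
  assumes row: "\<And>k. (i,k) \<in> F \<longleftrightarrow> lo \<le> k \<and> k < hi" and "hi \<le> C" "lo \<le> k" "k < hi"
  shows "sR C F (i,k) = (i, if k+1 < hi then k+1 else lo)"
proof (cases "k+1 < hi")
  case True
  have "sR C F (i,k) = (i, (k+1) mod C)"
    by (rule sR_eq) (use True assms in auto)
  then show ?thesis using True assms by simp
next
  case False
  then have k: "k = hi - 1" using assms by simp
  have "sR C F (i,k) = (i, (k+(C-k+lo)) mod C)"
  proof (rule sR_eq)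
    show "1 \<le> C - k + lo" using assms by simp
    have "(k+(C-k+lo)) mod C = lo" using assms by (simp add: le_mod_geq)
    then show "(i, (k + (C - k + lo)) mod C) \<in> F" using row assms by simp
    fix s assume s: "1 \<le> s" "s < C - k + lo"
    show "(i, (k + s) mod C) \<notin> F"
    proof (cases "k+s < C")
      case True
      have "hi \<le> k+s" using k s assms(4) by simp
      then show ?thesis using row True by simp
    next
      case False
      then have "(k+s) mod C = k+s-C" using s assms by (simp add: le_mod_geq)
      then show ?thesis using row k s False assms by simp
    qed
  qed
  moreover have "(k+(C-k+lo)) mod C = lo" using assms by (simp add: le_mod_geq)
  ultimately show ?thesis using False by simp
qed

lemma sR_inv_block:
  assumes row: "\<And>k. (i,k) \<in> F \<longleftrightarrow> lo \<le> k \<and> k < hi" and "hi \<le> C" "lo \<le> c" "c < hi"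
  shows "sR_inv C F (i,c) = (i, if c = lo then hi - 1 else c - 1)"
  unfolding sR_inv_def the_inv_into_def
proof (rule the_equality)
  let ?x = "(i, if c = lo then hi - 1 else c - 1)"
  show "?x \<in> F \<and> sR C F ?x = (i,c)"
  proof (cases "c = lo")
    case True
    have "sR C F (i, hi - 1) = (i, if hi - 1 + 1 < hi then hi - 1 + 1 else lo)"
      by (rule sR_block[OF row]) (use assms True in simp_all)
    moreover have "(i, hi - 1) \<in> F" using row assms True by simp
    ultimately show ?thesis using True assms by simp
  next
    case False
    have "sR C F (i, c - 1) = (i, if c - 1 + 1 < hi then c - 1 + 1 else lo)"
      by (rule sR_block[OF row]) (use assms False in simp_all)
    moreover have "lo \<le> c - 1" "c - 1 < hi" using assms(3,4) False by auto
    then have "(i, c - 1) \<in> F" using row by simp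
    ultimately show ?thesis using False assms by simp
  qed
  fix z assume z: "z \<in> F \<and> sR C F z = (i,c)"
  obtain r k where zz: "z = (r,k)" by force
  have "r = i" using z zz fst_sR[of C F z] by simp
  then have k: "lo \<le> k" "k < hi" using z zz row by auto
  have "sR C F (i,k) = (i, if k+1 < hi then k+1 else lo)"
    by (rule sR_block[OF row]) (use k assms in simp_all)
  then have "c = (if k+1 < hi then k+1 else lo)" using z zz \<open>r = i\<close> by simp
  then have "k = (if c = lo then hi - 1 else c - 1)" using k assms
    by (cases "k+1 < hi") simp_all
  then show "z = ?x" using zz \<open>r = i\<close> by simp
qed


lemma mod_pred: "c < (L::nat) \<Longrightarrow> (if c = 0 then L - 1 else c - 1) = (c + (L - 1)) mod L"
  by (cases "c = 0") (simp_all add: le_mod_geq)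

lemma mod_succ: assumes "k < (L::nat)" shows "(if k + 1 < L then k + 1 else 0) = (k + 1) mod L"
proof (cases "k + 1 < L")
  case False
  then have "k + 1 = L" using assms by simp
  then show ?thesis by simp
qed simp

lemma first_return_eq:
  assumes "1 \<le> n" "m \<le> fst ((phi ^^ n) (fst x + m, snd x))"
    "\<And>s. 1 \<le> s \<Longrightarrow> s < n \<Longrightarrow> fst ((phi ^^ s) (fst x + m, snd x)) < m"
  shows "first_return phi m x = (fst ((phi ^^ n) (fst x + m, snd x)) - m, snd ((phi ^^ n) (fst x + m, snd x)))"
proof -
  have "(LEAST t. 1 \<le> t \<and> m \<le> fst ((phi ^^ t) (fst x + m, snd x))) = n"
    apply (rule Least_equality)
    using assms apply simp
    using assms not_le by blast
  then show ?thesis by (simp add: first_return_def Let_def)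
qed

lemma mod_shift:
  assumes "1 \<le> f" "f \<le> (L::nat)"
  shows "(x + f*(L-1)) mod L = (x + (L - f)) mod L"
proof -
  obtain g M where g: "f = Suc g" "L = Suc M" using assms by (cases f; cases L) auto
  have eq: "x + f*(L-1) = (x + (L - f)) + g * L" using g assms by (simp add: algebra_simps)
  show ?thesis unfolding eq by (rule mod_mult_self1)
qed

lemma arith_final:
  fixes a b f j :: nat
  assumes "0 < f" "f < a" "f < b"
  shows "(let c1 = (j+1+(a-f)) mod (a+b) in if c1 < a then c1 else a + (c1 - a + f) mod b) =
         (let u = (j+1+a) mod (a+b) in if a + f \<le> u then u else (u + f*(a+f-1)) mod (a+f))"
proof -
  define c1 where "c1 = (j+1+(a-f)) mod (a+b)"
  define u where "u = (j+1+a) mod (a+b)"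
  have c1C: "c1 < a + b" using assms by (simp add: c1_def)
  have "(c1 + f) mod (a+b) = u"
  proof -
    have "(c1 + f) mod (a+b) = (j+1+(a-f)+f) mod (a+b)" unfolding c1_def by (simp add: mod_add_left_eq)
    also have "j+1+(a-f)+f = j+1+a" using assms by simp
    finally show ?thesis by (simp add: u_def)
  qed
  then have ucase: "(c1 + f < a + b \<and> u = c1 + f) \<or> (a + b \<le> c1 + f \<and> u = c1 + f - (a+b))"
    using c1C assms by (cases "c1 + f < a + b") (auto simp: le_mod_geq)
  have sh: "(x + f*(a+f-1)) mod (a+f) = (x + a) mod (a+f)" for x
    using mod_shift[of f "a+f" x] assms by simp
  show ?thesis
    unfolding Let_def c1_def[symmetric] u_def[symmetric] sh
  proof (cases "c1 < a")
    case True
    then have "u = c1 + f" using ucase assms by auto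
    then show "(if c1 < a then c1 else a + (c1 - a + f) mod b) = (if a + f \<le> u then u else (u + a) mod (a + f))"
      using True by (simp add: le_mod_geq)
  next
    case False
    show "(if c1 < a then c1 else a + (c1 - a + f) mod b) = (if a + f \<le> u then u else (u + a) mod (a + f))"
    proof (cases "c1 + f < a + b")
      case True
      then have "u = c1 + f" using ucase by auto
      moreover have "c1 - a + f < b" using True False by simp
      ultimately show ?thesis using False by simp
    next
      case T2: False
      then have u: "u = c1 + f - (a+b)" using ucase by auto
      have "(c1 - a + f) mod b = c1 - a + f - b" using T2 False c1C assms
        by (simp add: le_mod_geq)
      moreover have "(u + a) mod (a + f) = c1 + f - b" using u T2 c1C assms by simp
      moreover have "\<not> a + f \<le> u" using u c1C assms by simp
      ultimately show ?thesis using False T2 by simp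
    qed
  qed
qed

locale arrs =
  fixes a b f d :: nat
  assumes a: "0<a" and b: "0<b" and f: "0<f" and d: "0<d" and fab: "f < min a b"
begin

abbreviation "FA \<equiv> stack (A1 a b f) a (J d (a+b))"
abbreviation "P \<equiv> bishop (a + d) (a + b) (stack (A1 a b f) a (J d (a + b)))"
abbreviation "FB \<equiv> stack (B1 a b f) (b+f) (J d (a+b))"
definition "S = (\<lambda>x. let F = stack (B1 a b f) (b + f) (J d (a + b)) in
                 if b + f \<le> fst x then sC (b + f + d) F (sR (a + b) F x)
                 else sC (b + f + d) F (sR_inv (a + b) F x))"

lemma memA: "(r,c) \<in> FA \<longleftrightarrow> c < a+b \<and> (r < a \<and> (r < a-f \<or> a \<le> c) \<or> a \<le> r \<and> r < a+d)"
  unfolding stack_def A1_def J_def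
  apply (cases "a \<le> r")
   apply (auto simp: not_le)
  apply (rule exI[of _ "r - a"]) apply simp
  done

lemma memB: "(r,c) \<in> FB \<longleftrightarrow> c < a+b \<and> (r < b+f \<and> (r < b \<or> c < a+f) \<or> b+f \<le> r \<and> r < b+f+d)"
  unfolding stack_def B1_def J_def
  apply (cases "b+f \<le> r")
   apply (auto simp: not_le)
  apply (rule exI[of _ "r - (b+f)"]) apply simp
  done


lemma fa: "f < a" and fb: "f < b" using fab by auto

lemma rowA_full: "r < a - f \<or> a \<le> r \<and> r < a + d \<Longrightarrow> (r,k) \<in> FA \<longleftrightarrow> 0 \<le> k \<and> k < a + b"
  by (auto simp: memA)
lemma rowA_part: "a - f \<le> r \<Longrightarrow> r < a \<Longrightarrow> (r,k) \<in> FA \<longleftrightarrow> a \<le> k \<and> k < a + b"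
  by (auto simp: memA)
lemma rowB_full: "r < b \<or> b + f \<le> r \<and> r < b + f + d \<Longrightarrow> (r,k) \<in> FB \<longleftrightarrow> 0 \<le> k \<and> k < a + b"
  by (auto simp: memB)
lemma rowB_part: "b \<le> r \<Longrightarrow> r < b + f \<Longrightarrow> (r,k) \<in> FB \<longleftrightarrow> 0 \<le> k \<and> k < a + f"
  using fab by (auto simp: memB)

lemma sR_A_full: assumes "r < a - f \<or> a \<le> r \<and> r < a + d" "c < a + b"
  shows "sR (a+b) FA (r,c) = (r, (c+1) mod (a+b))"
  using sR_block[of r FA 0 "a+b" "a+b" c, OF rowA_full[OF assms(1)]] assms mod_succ[of c "a+b"] by simp

lemma sR_A_part: assumes "a - f \<le> r" "r < a" "a \<le> c" "c < a + b"
  shows "sR (a+b) FA (r,c) = (r, if c + 1 < a + b then c + 1 else a)"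
  using sR_block[of r FA a "a+b" "a+b" c, OF rowA_part[OF assms(1,2)]] assms by simp

lemma sR_B_J: assumes "b + f \<le> r" "r < b + f + d" "c < a + b"
  shows "sR (a+b) FB (r,c) = (r, (c+1) mod (a+b))"
  using sR_block[of r FB 0 "a+b" "a+b" c, OF rowB_full] assms mod_succ[of c "a+b"] by simp

lemma sRi_B_full: assumes "r < b" "c < a + b"
  shows "sR_inv (a+b) FB (r,c) = (r, (c + (a+b-1)) mod (a+b))"
  using sR_inv_block[of r FB 0 "a+b" "a+b" c, OF rowB_full] assms mod_pred[of c "a+b"] by simp

lemma sRi_B_part: assumes "b \<le> r" "r < b + f" "c < a + f"
  shows "sR_inv (a+b) FB (r,c) = (r, (c + (a+f-1)) mod (a+f))"
  using sR_inv_block[of r FB 0 "a+f" "a+b" c, OF rowB_part[OF assms(1,2)]] assms mod_pred[of c "a+f"] fab by simp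

lemma sC_1: assumes "((r+1) mod R, c) \<in> F" shows "sC R F (r,c) = ((r+1) mod R, c)"
  using sC_eq[of 1 r R c F] assms by simp


lemma P_def': "P x = sC (a+d) FA (sR (a+b) FA x)"
  by (simp add: bishop_def)

lemma stepA_top: assumes "r + 1 < a - f" "c < a + b"
  shows "P (r,c) = (r+1, (c+1) mod (a+b))"
proof -
  have "((r+1) mod (a+d), (c+1) mod (a+b)) \<in> FA" using assms a by (simp add: memA; linarith?)
  then show ?thesis using assms sR_A_full[of r c] sC_1 by (simp add: P_def')
qed

lemma stepA_J: assumes "a \<le> r" "r < a + d" "c < a + b"
  shows "P (r,c) = ((r+1) mod (a+d), (c+1) mod (a+b))"
proof -
  have "((r+1) mod (a+d), (c+1) mod (a+b)) \<in> FA"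
  proof (cases "r + 1 < a + d")
    case True then show ?thesis using assms a by (simp add: memA; linarith?)
  next
    case False then have "r + 1 = a + d" using assms by simp
    then show ?thesis using assms a fa fb by (simp add: memA; linarith?)
  qed
  then show ?thesis using assms sR_A_full[of r c] sC_1 by (simp add: P_def')
qed

lemma stepA_mid_in: assumes "r = a - f - 1" "c < a + b" "a \<le> (c+1) mod (a+b)"
  shows "P (r,c) = (a - f, (c+1) mod (a+b))"
proof -
  have r1: "r + 1 = a - f" using assms fa by simp
  have m: "(r+1) mod (a+d) = a - f" using r1 d by simp
  have sR: "sR (a+b) FA (r,c) = (r,(c+1) mod (a+b))" by (rule sR_A_full) (use assms fa in auto)
  have mem: "(a-f, (c+1) mod (a+b)) \<in> FA" using assms fa f by (simp add: memA)
  have "sC (a+d) FA (r, (c+1) mod (a+b)) = ((r+1) mod (a+d), (c+1) mod (a+b))"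
    by (rule sC_1) (use mem m in simp)
  then show ?thesis using m by (simp add: P_def' sR)
qed

lemma stepA_mid_out: assumes "r = a - f - 1" "c < a + b" "(c+1) mod (a+b) < a"
  shows "P (r,c) = (a, (c+1) mod (a+b))"
proof -
  have r1: "r + 1 = a - f" using assms fa by simp
  have sR: "sR (a+b) FA (r,c) = (r,(c+1) mod (a+b))" by (rule sR_A_full) (use assms fa in auto)
  have "sC (a+d) FA (r, (c+1) mod (a+b)) = ((r + (f+1)) mod (a+d), (c+1) mod (a+b))"
  proof (rule sC_eq)
    have e: "r + (f+1) = a" using r1 fa by simp
    show "((r + (f+1)) mod (a+d), (c+1) mod (a+b)) \<in> FA" unfolding e using d a by (simp add: memA)
    fix s assume "1 \<le> s" "s < f + 1"
    then show "((r + s) mod (a+d), (c+1) mod (a+b)) \<notin> FA" using r1 d fa assms(3) by (simp add: memA; linarith?)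
  qed simp
  moreover have "(r + (f+1)) mod (a+d) = a" using r1 fa d by simp
  ultimately show ?thesis by (simp add: P_def' sR)
qed

lemma stepA_bot: assumes "a - f \<le> r" "r < a" "a \<le> c" "c < a + b"
  shows "P (r,c) = (r + 1, if c + 1 < a + b then c + 1 else a)"
proof -
  have "((r+1) mod (a+d), if c + 1 < a + b then c + 1 else a) \<in> FA"
    using assms d by (simp add: memA; linarith?)
  then show ?thesis using assms sR_A_part[of r c] sC_1 d by (simp add: P_def')
qed

lemma S_def1: "b + f \<le> fst x \<Longrightarrow> S x = sC (b+f+d) FB (sR (a+b) FB x)" by (simp add: S_def Let_def)
lemma S_def2: "\<not> b + f \<le> fst x \<Longrightarrow> S x = sC (b+f+d) FB (sR_inv (a+b) FB x)" by (simp add: S_def Let_def)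

lemma stepB_J: assumes "b + f \<le> r" "r < b + f + d" "c < a + b"
  shows "S (r,c) = ((r+1) mod (b+f+d), (c+1) mod (a+b))"
proof -
  have "((r+1) mod (b+f+d), (c+1) mod (a+b)) \<in> FB"
  proof (cases "r + 1 < b + f + d")
    case True then show ?thesis using assms a by (simp add: memB; linarith?)
  next
    case False then have "r + 1 = b + f + d" using assms by simp
    then show ?thesis using assms b by (simp add: memB; linarith?)
  qed
  then show ?thesis using assms sR_B_J[of r c] sC_1 S_def1[of "(r,c)"] by simp
qed

lemma stepB_top: assumes "r + 1 < b" "c < a + b"
  shows "S (r,c) = (r+1, (c + (a+b-1)) mod (a+b))"
proof -
  have "((r+1) mod (b+f+d), (c + (a+b-1)) mod (a+b)) \<in> FB" using assms by (simp add: memB; linarith?)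
  then show ?thesis using assms sRi_B_full[of r c] sC_1 S_def2[of "(r,c)"] by simp
qed

lemma stepB_mid_in: assumes "r = b - 1" "c < a + b" "(c + (a+b-1)) mod (a+b) < a + f"
  shows "S (r,c) = (b, (c + (a+b-1)) mod (a+b))"
proof -
  have r1: "r + 1 = b" using assms b by simp
  have m: "(r+1) mod (b+f+d) = b" using r1 f by simp
  have S2: "S (r,c) = sC (b+f+d) FB (sR_inv (a+b) FB (r,c))" by (rule S_def2) (use assms b in simp)
  have sR: "sR_inv (a+b) FB (r,c) = (r, (c + (a+b-1)) mod (a+b))" by (rule sRi_B_full) (use assms b in auto)
  have "(c + (a+b-1)) mod (a+b) < a+b" using a by simp
  then have mem: "(b, (c + (a+b-1)) mod (a+b)) \<in> FB" using assms f by (simp add: memB)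
  have "sC (b+f+d) FB (r, (c + (a+b-1)) mod (a+b)) = ((r+1) mod (b+f+d), (c + (a+b-1)) mod (a+b))"
    by (rule sC_1) (use mem m in simp)
  then show ?thesis by (simp only: S2 sR m)
qed

lemma stepB_mid_out: assumes "r = b - 1" "c < a + b" "a + f \<le> (c + (a+b-1)) mod (a+b)"
  shows "S (r,c) = (b + f, (c + (a+b-1)) mod (a+b))"
proof -
  have r1: "r + 1 = b" using assms b by simp
  have S2: "S (r,c) = sC (b+f+d) FB (sR_inv (a+b) FB (r,c))" by (rule S_def2) (use assms b in simp)
  have sR: "sR_inv (a+b) FB (r,c) = (r, (c + (a+b-1)) mod (a+b))" by (rule sRi_B_full) (use assms b in auto)
  have "sC (b+f+d) FB (r, (c + (a+b-1)) mod (a+b)) = ((r + (f+1)) mod (b+f+d), (c + (a+b-1)) mod (a+b))"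
  proof (rule sC_eq)
    show "((r + (f+1)) mod (b+f+d), (c + (a+b-1)) mod (a+b)) \<in> FB" using r1 d by (simp add: memB)
    fix s assume "1 \<le> s" "s < f + 1"
    then show "((r + s) mod (b+f+d), (c + (a+b-1)) mod (a+b)) \<notin> FB" using r1 d assms(3) by (simp add: memB; linarith?)
  qed simp
  moreover have "(r + (f+1)) mod (b+f+d) = b + f" using r1 d by simp
  ultimately show ?thesis by (simp only: S2 sR)
qed

lemma stepB_bot: assumes "b \<le> r" "r < b + f" "c < a + f"
  shows "S (r,c) = (r + 1, (c + (a+f-1)) mod (a+f))"
proof -
  have "(c + (a+f-1)) mod (a+f) < a + f" using fa by simp
  then have "(c + (a+f-1)) mod (a+f) < a + b" using fb by linarith
  then have "((r+1) mod (b+f+d), (c + (a+f-1)) mod (a+f)) \<in> FB"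
    using assms d fa fb by (simp add: memB; linarith?)
  then show ?thesis using assms sRi_B_part[of r c] sC_1 S_def2[of "(r,c)"] d by simp
qed


lemma orbA_top: assumes j: "j < a + b" shows "s < a - f \<Longrightarrow> (P^^(Suc s)) (d - 1 + a, j) = (s, (j+1+s) mod (a+b))"
proof (induction s)
  case 0
  have "P (d - 1 + a, j) = ((d - 1 + a + 1) mod (a+d), (j+1) mod (a+b))"
    by (rule stepA_J) (use j d in auto)
  moreover have "(d - 1 + a + 1) mod (a+d) = 0" using d by (simp add: add.commute)
  ultimately show ?case by simp
next
  case (Suc s)
  then have "(P^^(Suc s)) (d - 1 + a, j) = (s, (j+1+s) mod (a+b))" by simp
  moreover have "P (s, (j+1+s) mod (a+b)) = (s+1, ((j+1+s) mod (a+b) + 1) mod (a+b))"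
    by (rule stepA_top) (use Suc.prems a in auto)
  ultimately show ?case by (simp add: mod_Suc_eq)
qed

lemma orbA_out: assumes j: "j < a + b" and c1: "(j+1+(a-f)) mod (a+b) < a"
  shows "(P^^(a - f + 1)) (d - 1 + a, j) = (a, (j+1+(a-f)) mod (a+b))"
proof -
  have "(P^^(Suc (a-f-1))) (d - 1 + a, j) = (a-f-1, (j+1+(a-f-1)) mod (a+b))"
    by (rule orbA_top[OF j]) (use fa f in simp)
  moreover have e: "Suc (a-f-1) = a - f" using fa f by simp
  moreover have "((j+1+(a-f-1)) mod (a+b) + 1) mod (a+b) = (j+1+(a-f)) mod (a+b)"
  proof -
    have "(j+1+(a-f-1)) + 1 = j+1+(a-f)" using fa f by simp
    then show ?thesis by (metis mod_add_left_eq)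
  qed
  moreover have "P (a-f-1, (j+1+(a-f-1)) mod (a+b)) = (a, ((j+1+(a-f-1)) mod (a+b) + 1) mod (a+b))"
    by (rule stepA_mid_out) (use a c1 calculation in auto)
  ultimately show ?thesis by (metis Suc_eq_plus1 comp_apply funpow.simps(2))
qed

lemma orbA_in0: assumes j: "j < a + b" and c1: "a \<le> (j+1+(a-f)) mod (a+b)"
  shows "(P^^(a - f + 1)) (d - 1 + a, j) = (a - f, (j+1+(a-f)) mod (a+b))"
proof -
  have "(P^^(Suc (a-f-1))) (d - 1 + a, j) = (a-f-1, (j+1+(a-f-1)) mod (a+b))"
    by (rule orbA_top[OF j]) (use fa f in simp)
  moreover have e: "Suc (a-f-1) = a - f" using fa f by simp
  moreover have "((j+1+(a-f-1)) mod (a+b) + 1) mod (a+b) = (j+1+(a-f)) mod (a+b)"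
  proof -
    have "(j+1+(a-f-1)) + 1 = j+1+(a-f)" using fa f by simp
    then show ?thesis by (metis mod_add_left_eq)
  qed
  moreover have "P (a-f-1, (j+1+(a-f-1)) mod (a+b)) = (a-f, ((j+1+(a-f-1)) mod (a+b) + 1) mod (a+b))"
    by (rule stepA_mid_in) (use a c1 calculation in auto)
  ultimately show ?thesis by (metis Suc_eq_plus1 comp_apply funpow.simps(2))
qed

lemma orbA_bot: assumes j: "j < a + b" and c1: "a \<le> (j+1+(a-f)) mod (a+b)"
  shows "k \<le> f \<Longrightarrow> (P^^(a - f + 1 + k)) (d - 1 + a, j) = (a - f + k, a + ((j+1+(a-f)) mod (a+b) - a + k) mod b)"
proof (induction k)
  case 0
  have "(j+1+(a-f)) mod (a+b) < a + b" using a by simp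
  then have "(j+1+(a-f)) mod (a+b) - a < b" using c1 by (simp add: less_diff_conv2)
  then show ?case using orbA_in0[OF j c1] c1 by simp
next
  case (Suc k)
  let ?m = "((j+1+(a-f)) mod (a+b) - a + k) mod b"
  have IH: "(P^^(a - f + 1 + k)) (d - 1 + a, j) = (a - f + k, a + ?m)" using Suc by simp
  have mb: "?m < b" using b by simp
  have "P (a - f + k, a + ?m) = (a - f + k + 1, if a + ?m + 1 < a + b then a + ?m + 1 else a)"
    by (rule stepA_bot) (use Suc.prems fa mb in auto)
  moreover have "(if a + ?m + 1 < a + b then a + ?m + 1 else a) = a + ((j+1+(a-f)) mod (a+b) - a + Suc k) mod b"
  proof (cases "?m + 1 < b")
    case True
    then show ?thesis by (simp add: mod_Suc)
  next
    case False
    then have "?m + 1 = b" using mb by simp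
    then show ?thesis by (simp add: mod_Suc)
  qed
  ultimately show ?case using IH by simp
qed


lemma orbB_top: assumes j: "j < a + b" shows "s < b \<Longrightarrow> (S^^(Suc s)) (d - 1 + (b+f), j) = (s, (j+1+s*(a+b-1)) mod (a+b))"
proof (induction s)
  case 0
  have "S (d - 1 + (b+f), j) = ((d - 1 + (b+f) + 1) mod (b+f+d), (j+1) mod (a+b))"
    by (rule stepB_J) (use j d in auto)
  moreover have "(d - 1 + (b+f) + 1) mod (b+f+d) = 0" using d by (simp add: add.commute)
  ultimately show ?case by simp
next
  case (Suc s)
  then have "(S^^(Suc s)) (d - 1 + (b+f), j) = (s, (j+1+s*(a+b-1)) mod (a+b))" by simp
  moreover have "S (s, (j+1+s*(a+b-1)) mod (a+b)) = (s+1, ((j+1+s*(a+b-1)) mod (a+b) + (a+b-1)) mod (a+b))"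
    by (rule stepB_top) (use Suc.prems a in auto)
  moreover have "((j+1+s*(a+b-1)) mod (a+b) + (a+b-1)) mod (a+b) = (j+1+Suc s*(a+b-1)) mod (a+b)"
  proof -
    have eq: "j+1+s*(a+b-1) + (a+b-1) = j+1+Suc s*(a+b-1)" by simp
    show ?thesis by (metis mod_add_left_eq eq)
  qed
  ultimately show ?case by simp
qed

lemma u_eq: "(j+1+b*(a+b-1)) mod (a+b) = (j+1+a) mod (a+b)"
proof -
  have "b*(a+b-1) = a + (b-1)*(a+b)" using b
    by (cases b) (simp_all add: algebra_simps)
  then have eq: "j+1+b*(a+b-1) = (j+1+a) + (b-1)*(a+b)" by simp
  show ?thesis unfolding eq by (rule mod_mult_self1)
qed

lemma orbB_b: assumes j: "j < a + b"
  shows "(S^^b) (d - 1 + (b+f), j) = (b - 1, (j+1+(b-1)*(a+b-1)) mod (a+b))"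
  using orbB_top[OF j, of "b-1"] b by simp

lemma stepb_col: "((j+1+(b-1)*(a+b-1)) mod (a+b) + (a+b-1)) mod (a+b) = (j+1+a) mod (a+b)"
proof -
  have "((j+1+(b-1)*(a+b-1)) mod (a+b) + (a+b-1)) mod (a+b) = (j+1+(b-1)*(a+b-1) + (a+b-1)) mod (a+b)"
    by (simp add: mod_add_left_eq)
  also have "j+1+(b-1)*(a+b-1) + (a+b-1) = j+1+b*(a+b-1)" using b by (cases b) simp_all
  finally show ?thesis using u_eq by simp
qed

lemma orbB_out: assumes j: "j < a + b" and u: "a + f \<le> (j+1+a) mod (a+b)"
  shows "(S^^(b + 1)) (d - 1 + (b+f), j) = (b + f, (j+1+a) mod (a+b))"
proof -
  have "S (b - 1, (j+1+(b-1)*(a+b-1)) mod (a+b)) = (b + f, ((j+1+(b-1)*(a+b-1)) mod (a+b) + (a+b-1)) mod (a+b))"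
    by (rule stepB_mid_out) (use a u stepb_col in auto)
  note X = this[unfolded stepb_col]
  show ?thesis using orbB_b[OF j] X by (metis Suc_eq_plus1 comp_apply funpow.simps(2))
qed

lemma orbB_in0: assumes j: "j < a + b" and u: "(j+1+a) mod (a+b) < a + f"
  shows "(S^^(b + 1)) (d - 1 + (b+f), j) = (b, (j+1+a) mod (a+b))"
proof -
  have "S (b - 1, (j+1+(b-1)*(a+b-1)) mod (a+b)) = (b, ((j+1+(b-1)*(a+b-1)) mod (a+b) + (a+b-1)) mod (a+b))"
    by (rule stepB_mid_in) (use a u stepb_col in auto)
  note X = this[unfolded stepb_col]
  show ?thesis using orbB_b[OF j] X by (metis Suc_eq_plus1 comp_apply funpow.simps(2))
qed

lemma orbB_bot: assumes j: "j < a + b" and u: "(j+1+a) mod (a+b) < a + f"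
  shows "k \<le> f \<Longrightarrow> (S^^(b + 1 + k)) (d - 1 + (b+f), j) = (b + k, ((j+1+a) mod (a+b) + k*(a+f-1)) mod (a+f))"
proof (induction k)
  case 0
  then show ?case using orbB_in0[OF j u] u by simp
next
  case (Suc k)
  let ?u = "(j+1+a) mod (a+b)"
  have IH: "(S^^(b + 1 + k)) (d - 1 + (b+f), j) = (b + k, (?u + k*(a+f-1)) mod (a+f))" using Suc by simp
  have "S (b + k, (?u + k*(a+f-1)) mod (a+f)) = (b + k + 1, ((?u + k*(a+f-1)) mod (a+f) + (a+f-1)) mod (a+f))"
    by (rule stepB_bot) (use Suc.prems a in auto)
  moreover have "((?u + k*(a+f-1)) mod (a+f) + (a+f-1)) mod (a+f) = (?u + Suc k*(a+f-1)) mod (a+f)"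
  proof -
    have eq: "?u + k*(a+f-1) + (a+f-1) = ?u + Suc k*(a+f-1)" by simp
    show ?thesis by (metis mod_add_left_eq eq)
  qed
  ultimately show ?case using IH by simp
qed


end

context arrs begin
lemma FRA: assumes j: "j < a + b"
  shows "first_return P a (d-1, j) = (0, let c1 = (j+1+(a-f)) mod (a+b) in if c1 < a then c1 else a + (c1 - a + f) mod b)"
proof (cases "(j+1+(a-f)) mod (a+b) < a")
  case True
  have "first_return P a (d-1, j) = (fst ((P^^(a-f+1)) (fst (d-1,j) + a, snd (d-1,j))) - a, snd ((P^^(a-f+1)) (fst (d-1,j) + a, snd (d-1,j))))"
  proof (rule first_return_eq)
    show "a \<le> fst ((P^^(a-f+1)) (fst (d-1,j) + a, snd (d-1,j)))" using orbA_out[OF j True] by simp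
    fix s assume s: "1 \<le> s" "s < a - f + 1"
    then obtain s' where s': "s = Suc s'" "s' < a - f" by (cases s) auto
    show "fst ((P^^s) (fst (d-1,j) + a, snd (d-1,j))) < a" using orbA_top[OF j s'(2)] s' by simp
  qed simp
  then show ?thesis using orbA_out[OF j True] True by (simp add: Let_def)
next
  case False
  then have F: "a \<le> (j+1+(a-f)) mod (a+b)" by simp
  have "first_return P a (d-1, j) = (fst ((P^^(a-f+1+f)) (fst (d-1,j) + a, snd (d-1,j))) - a, snd ((P^^(a-f+1+f)) (fst (d-1,j) + a, snd (d-1,j))))"
  proof (rule first_return_eq)
    show "a \<le> fst ((P^^(a-f+1+f)) (fst (d-1,j) + a, snd (d-1,j)))" using orbA_bot[OF j F, of f] fa by simp
    fix s assume s: "1 \<le> s" "s < a - f + 1 + f"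
    show "fst ((P^^s) (fst (d-1,j) + a, snd (d-1,j))) < a"
    proof (cases "s \<le> a - f")
      case True
      then obtain s' where s': "s = Suc s'" "s' < a - f" using s by (cases s) auto
      show ?thesis using orbA_top[OF j s'(2)] s' by simp
    next
      case False
      then obtain k where k: "s = a - f + 1 + k" "k < f" using s
        by (intro that[of "s - (a - f + 1)"]) auto
      show ?thesis using orbA_bot[OF j F, of k] k fa by simp
    qed
  qed simp
  then show ?thesis using orbA_bot[OF j F, of f] F fa by (simp add: Let_def)
qed

lemma FRB: assumes j: "j < a + b"
  shows "first_return S (b+f) (d-1, j) = (0, let u = (j+1+a) mod (a+b) in if a + f \<le> u then u else (u + f*(a+f-1)) mod (a+f))"
proof (cases "a + f \<le> (j+1+a) mod (a+b)")
  case True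
  have "first_return S (b+f) (d-1, j) = (fst ((S^^(b+1)) (fst (d-1,j) + (b+f), snd (d-1,j))) - (b+f), snd ((S^^(b+1)) (fst (d-1,j) + (b+f), snd (d-1,j))))"
  proof (rule first_return_eq)
    show "b+f \<le> fst ((S^^(b+1)) (fst (d-1,j) + (b+f), snd (d-1,j)))" using orbB_out[OF j True] by simp
    fix s assume s: "1 \<le> s" "s < b + 1"
    then obtain s' where s': "s = Suc s'" "s' < b" by (cases s) auto
    show "fst ((S^^s) (fst (d-1,j) + (b+f), snd (d-1,j))) < b+f" using orbB_top[OF j s'(2)] s' by simp
  qed simp
  then show ?thesis using orbB_out[OF j True] True by (simp add: Let_def)
next
  case False
  then have F: "(j+1+a) mod (a+b) < a + f" by simp
  have "first_return S (b+f) (d-1, j) = (fst ((S^^(b+1+f)) (fst (d-1,j) + (b+f), snd (d-1,j))) - (b+f), snd ((S^^(b+1+f)) (fst (d-1,j) + (b+f), snd (d-1,j))))"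
  proof (rule first_return_eq)
    show "b+f \<le> fst ((S^^(b+1+f)) (fst (d-1,j) + (b+f), snd (d-1,j)))" using orbB_bot[OF j F, of f] by simp
    fix s assume s: "1 \<le> s" "s < b + 1 + f"
    show "fst ((S^^s) (fst (d-1,j) + (b+f), snd (d-1,j))) < b+f"
    proof (cases "s \<le> b")
      case True
      then obtain s' where s': "s = Suc s'" "s' < b" using s by (cases s) auto
      show ?thesis using orbB_top[OF j s'(2)] s' by simp
    next
      case False
      then obtain k where k: "s = b + 1 + k" "k < f" using s
        by (intro that[of "s - (b + 1)"]) auto
      show ?thesis using orbB_bot[OF j F, of k] k by simp
    qed
  qed simp
  then show ?thesis using orbB_bot[OF j F, of f] F by (simp add: Let_def)
qed


lemma main: "phi_sigma_equiv P a S (b+f) (J d (a+b))"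
  unfolding phi_sigma_equiv_def
proof
  fix x assume "x \<in> J d (a+b)"
  then obtain i j where x: "x = (i,j)" "i < d" "j < a+b" by (cases x) (auto simp: J_def)
  have PA: "P (i+a, j) = ((i+a+1) mod (a+d), (j+1) mod (a+b))" by (rule stepA_J) (use x in auto)
  have SB: "S (i+(b+f), j) = ((i+(b+f)+1) mod (b+f+d), (j+1) mod (a+b))" by (rule stepB_J) (use x in auto)
  have cA: "fst (P (i+a, j)) < a \<longleftrightarrow> i = d-1"
  proof (cases "i + 1 < d")
    case True then show ?thesis using PA by simp
  next
    case False then have "i + 1 = d" using x by simp
    then have e: "i+a+1 = a+d" by simp
    have "(i+a+1) mod (a+d) = 0" unfolding e by simp
    then show ?thesis using PA a \<open>i + 1 = d\<close> by simp
  qed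
  have cB: "fst (S (i+(b+f), j)) < b+f \<longleftrightarrow> i = d-1"
  proof (cases "i + 1 < d")
    case True then show ?thesis using SB by simp
  next
    case False then have "i + 1 = d" using x by simp
    then have e: "i+(b+f)+1 = b+f+d" by simp
    have "(i+(b+f)+1) mod (b+f+d) = 0" unfolding e by simp
    then show ?thesis using SB b \<open>i + 1 = d\<close> by simp
  qed
  show "(fst (P (fst x + a, snd x)) < a \<longleftrightarrow> fst (S (fst x + (b+f), snd x)) < b+f) \<and>
        (fst (P (fst x + a, snd x)) < a \<and> fst (S (fst x + (b+f), snd x)) < b+f \<longrightarrow>
         first_return P a x = first_return S (b+f) x)"
  proof
    show "fst (P (fst x + a, snd x)) < a \<longleftrightarrow> fst (S (fst x + (b+f), snd x)) < b+f"
      using cA cB x by simp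
    show "fst (P (fst x + a, snd x)) < a \<and> fst (S (fst x + (b+f), snd x)) < b+f \<longrightarrow>
         first_return P a x = first_return S (b+f) x"
    proof
      assume "fst (P (fst x + a, snd x)) < a \<and> fst (S (fst x + (b+f), snd x)) < b+f"
      then have i: "i = d - 1" using cA x by simp
      show "first_return P a x = first_return S (b+f) x"
        using FRA[OF x(3)] FRB[OF x(3)] arith_final[OF f fa fb, of j] x i by simp
    qed
  qed
qed

end

theorem lemma4p4:
  fixes a b f d :: nat
  assumes "0 < a" and "0 < b" and "0 < f" and "0 < d" and "f < min a b"
  shows "phi_sigma_equiv
           (bishop (a + d) (a + b) (stack (A1 a b f) a (J d (a + b)))) a
           (\<lambda>x. let F = stack (B1 a b f) (b + f) (J d (a + b)) in
                 if b + f \<le> fst x then sC (b + f + d) F (sR (a + b) F x)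
                 else sC (b + f + d) F (sR_inv (a + b) F x))
           (b + f)
           (J d (a + b))"
proof -
  interpret arrs a b f d using assms by unfold_locales
  show ?thesis using main unfolding S_def .
qed

end
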